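(* Let $r\ge 1$ and let $\epsilon,\xi_1,\dots,\xi_{r+1},p_1,\dots,p_{r+1},a_1,\dots,a_{r+1}$ be indeterminates. Put $s_i(z)=z-p_i$, $\Lambda(z)=\prod_{i=1}^{r+1}(z-a_i)$, and let $\mathrm{Wr}$ denote the relations (coefficientwise in $z$) $$\frac{\det_{1\le i,j\le r+1}\big[\xi_i^{j-1}\,s_i(z+\epsilon(j-1))\big]}{\det_{1\le i,j\le r+1}\big[\xi_i^{j-1}\big]}=\Lambda(z).$$ Define ${\rm Fun}(\epsilon{\rm Op}_Z^{\Lambda})=\mathbb{C}(\epsilon,\xi_i,p_i,a_i)/\mathrm{Wr}$. Let $m=(m_{ij})_{i,j=1}^{r+1}$ be the trigonometric Calogero–Moser Lax matrix $$m_{ii}=p_i-\epsilon\,\xi_i\sum_{k\neq i}\frac{1}{\xi_i-\xi_k},\qquad m_{ij}=\frac{\epsilon\,\xi_i}{\xi_i-\xi_j}\,\frac{\prod_{k\neq i}(\xi_i-\xi_k)}{\prod_{k\neq j}(\xi_j-\xi_k)}\ (i\neq j),$$ and define the tCM Hamiltonians $H^{tCM}_k(\epsilon,\{\xi_i\},\{p_i\})$ by $\det(z-m)=\sum_k H^{tCM}_k z^k$. Then there is an isomorphism of algebras $${\rm Fun}(\epsilon{\rm Op}_Z^{\Lambda})\cong \mathbb{C}(\epsilon,\xi_i,p_i,a_i)\big/\big(\text{relations } \det(z-m)=\Lambda(z)\text{ coefficientwise in } z\big).$$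
   Context: This algebra is the algebra of functions on the space of canonical $Z$-twisted Miura $(SL(r+1),\epsilon)$-opers on $\mathbb{P}^1$ (with $Z=\mathrm{diag}(\xi_1,\dots,\xi_{r+1})$ regular semisimple, and regular singularities exactly at the distinct roots $a_i$ of $\Lambda$); for such opers the section of the line subbundle has components $s_i(z)=z-p_i$ and the only defining relation is the $\epsilon$-shifted twisted Wronskian condition $\mathrm{Wr}$ above. *)

theory Defs
  imports "Jordan_Normal_Form.Char_Poly"
begin

text \<open>Indices i,j run over 0..r (i.e. i < r+1), shifted by one from the paper.
  All polynomials are polynomials in the variable z with complex coefficients;
  the indeterminates eps, xi_i, p_i, a_i are given arbitrary complex values.\<close>

definition vander_mat :: "nat \<Rightarrow> (nat \<Rightarrow> complex) \<Rightarrow> complex mat" where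
  "vander_mat n xi = mat n n (\<lambda>(i,j). xi i ^ j)"

definition wr_mat :: "nat \<Rightarrow> complex \<Rightarrow> (nat \<Rightarrow> complex) \<Rightarrow> (nat \<Rightarrow> complex) \<Rightarrow> complex poly mat" where
  "wr_mat n eps xi p = mat n n (\<lambda>(i,j). Polynomial.smult (xi i ^ j) [: eps * of_nat j - p i, 1 :])"

definition wr_poly :: "nat \<Rightarrow> complex \<Rightarrow> (nat \<Rightarrow> complex) \<Rightarrow> (nat \<Rightarrow> complex) \<Rightarrow> complex poly" where
  "wr_poly n eps xi p = Polynomial.smult (1 / det (vander_mat n xi)) (det (wr_mat n eps xi p))"

definition Lambda_poly :: "nat \<Rightarrow> (nat \<Rightarrow> complex) \<Rightarrow> complex poly" where
  "Lambda_poly n a = (\<Prod>i<n. [: - a i, 1 :])"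

definition tCM_lax :: "nat \<Rightarrow> complex \<Rightarrow> (nat \<Rightarrow> complex) \<Rightarrow> (nat \<Rightarrow> complex) \<Rightarrow> complex mat" where
  "tCM_lax n eps xi p = mat n n (\<lambda>(i,j).
     if i = j then p i - eps * xi i * (\<Sum>k\<in>{0..<n} - {i}. 1 / (xi i - xi k))
     else eps * xi i / (xi i - xi j) *
          ((\<Prod>k\<in>{0..<n} - {i}. xi i - xi k) / (\<Prod>k\<in>{0..<n} - {j}. xi j - xi k)))"

definition tCM_poly :: "nat \<Rightarrow> complex \<Rightarrow> (nat \<Rightarrow> complex) \<Rightarrow> (nat \<Rightarrow> complex) \<Rightarrow> complex poly" where
  "tCM_poly n eps xi p = char_poly (tCM_lax n eps xi p)"

definition tCM_hamiltonian :: "nat \<Rightarrow> complex \<Rightarrow> (nat \<Rightarrow> complex) \<Rightarrow> (nat \<Rightarrow> complex) \<Rightarrow> nat \<Rightarrow> complex" where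
  "tCM_hamiltonian n eps xi p k = coeff (tCM_poly n eps xi p) k"

end

theory Submission
  imports Defs
begin


lemma diag_mult_left:
  assumes X: "X \<in> carrier_mat n m" and i: "i < n" and j: "j < m"
  shows "(mat n n (\<lambda>(i,j). if i = j then d i else 0) * X) $$ (i,j) = d i * X $$ (i,j)"
proof -
  have "(mat n n (\<lambda>(i,j). if i = j then d i else 0) * X) $$ (i,j)
      = (\<Sum>l<n. (if i = l then d i else 0) * X $$ (l,j))"
    using X i j by (simp add: scalar_prod_def atLeast0LessThan)
  also have "\<dots> = (\<Sum>l<n. if l = i then d i * X $$ (i,j) else 0)"
    by (rule sum.cong) auto
  also have "\<dots> = d i * X $$ (i,j)"
    using i by simp
  finally show ?thesis .
qed

lemma diag_mult_right:
  assumes X: "X \<in> carrier_mat m n" and i: "i < m" and j: "j < n"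
  shows "(X * mat n n (\<lambda>(i,j). if i = j then d i else 0)) $$ (i,j) = X $$ (i,j) * d j"
proof -
  have "(X * mat n n (\<lambda>(i,j). if i = j then d i else 0)) $$ (i,j)
      = (\<Sum>l<n. X $$ (i,l) * (if l = j then d l else 0))"
    using X i j by (simp add: scalar_prod_def atLeast0LessThan)
  also have "\<dots> = (\<Sum>l<n. if l = j then X $$ (i,j) * d j else 0)"
    by (rule sum.cong) auto
  also have "\<dots> = X $$ (i,j) * d j"
    using j by simp
  finally show ?thesis .
qed

lemma diag_sim_char_poly:
  fixes A B :: "complex mat"
  assumes A: "A \<in> carrier_mat n n" and B: "B \<in> carrier_mat n n"
    and d: "\<And>i. i < n \<Longrightarrow> d i \<noteq> 0"
    and rel: "\<And>i j. i < n \<Longrightarrow> j < n \<Longrightarrow> A $$ (i,j) * d j = d i * B $$ (j,i)"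
  shows "char_poly A = char_poly B"
proof -
  define P where "P = mat n n (\<lambda>(i,j). if i = j then d i else 0)"
  define Q where "Q = mat n n (\<lambda>(i,j). if i = j then 1 / d i else 0)"
  have P: "P \<in> carrier_mat n n" and Q: "Q \<in> carrier_mat n n" unfolding P_def Q_def by auto
  have BT: "B\<^sup>T \<in> carrier_mat n n" using B by auto
  have PQ: "P * Q = 1\<^sub>m n"
    by (rule eq_matI, unfold P_def Q_def, subst diag_mult_left, insert d, auto)
  have QP: "Q * P = 1\<^sub>m n"
    by (rule eq_matI, unfold P_def Q_def, subst diag_mult_left, insert d, auto)
  have eq: "A = P * B\<^sup>T * Q"
  proof (rule eq_matI)
    fix i j assume i: "i < dim_row (P * B\<^sup>T * Q)" and j: "j < dim_col (P * B\<^sup>T * Q)"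
    hence i: "i < n" and j: "j < n" using P Q by auto
    have "(P * B\<^sup>T * Q) $$ (i,j) = (P * B\<^sup>T) $$ (i,j) * (1 / d j)"
      unfolding Q_def by (rule diag_mult_right[OF _ i j], insert P BT, auto)
    also have "(P * B\<^sup>T) $$ (i,j) = d i * B $$ (j,i)"
      unfolding P_def by (subst diag_mult_left[OF BT i j], insert B i j, auto)
    also have "d i * B $$ (j,i) = A $$ (i,j) * d j" using rel[OF i j] by simp
    finally show "A $$ (i,j) = (P * B\<^sup>T * Q) $$ (i,j)" using d[OF j] by simp
  qed (insert A P Q, auto)
  have "similar_mat A B\<^sup>T"
    by (rule similar_matI[OF _ PQ QP eq], insert A P Q BT, auto)
  hence "char_poly A = char_poly B\<^sup>T" by (rule char_poly_similar)
  also have "\<dots> = char_poly B" using B by simp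
  finally show ?thesis .
qed



lemma char_poly_row:
  fixes A :: "'a :: idom mat"
  assumes A: "A \<in> carrier_mat n n" and k: "k < n"
    and 0: "\<And>j. j < n \<Longrightarrow> j \<noteq> k \<Longrightarrow> A $$ (k,j) = 0"
  shows "char_poly A = [: - A $$ (k,k), 1 :] * char_poly (mat_delete A k k)"
proof -
  let ?sum = "[:0, 1:] \<cdot>\<^sub>m 1\<^sub>m n + map_mat (\<lambda>a. [:- a:]) A"
  define S where "S = ?sum"
  let ?f = "\<lambda>j. S $$ (k, j) * cofactor S k j"
  have S: "S \<in> carrier_mat n n" using A unfolding S_def by auto
  from A have id: "dim_row A = n" by auto
  have "char_poly A = (\<Sum>j<n. ?f j)"
    unfolding char_poly_def[of A] char_poly_matrix_def
    using laplace_expansion_row[OF S k] unfolding S_def using A by simp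
  also have "\<dots> = ?f k + sum ?f ({..<n} - {k})"
    by (rule sum.remove[of _ k], insert k, auto)
  also have "\<dots> = ?f k"
  proof (subst sum.neutral, intro ballI)
    fix j
    assume "j \<in> {..<n} - {k}"
    hence j: "j < n" and jk: "j \<noteq> k" by auto
    show "?f j = 0" unfolding S_def using jk j k A 0[OF j jk] by simp
  qed simp
  also have "?f k = [: - A $$ (k,k), 1 :] * (cofactor S k k)"
    unfolding S_def using k A by simp
  also have "cofactor S k k = det (mat_delete S k k)"
    unfolding cofactor_def by simp
  also have "\<dots> = char_poly (mat_delete A k k)"
    unfolding char_poly_def char_poly_matrix_def S_def
  proof (rule arg_cong[of _ _ det])
    show "mat_delete ?sum k k = [:0, 1:] \<cdot>\<^sub>m 1\<^sub>m (dim_row (mat_delete A k k)) + map_mat (\<lambda>a. [:- a:]) (mat_delete A k k)"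
      using k A by (auto simp: mat_delete_def)
  qed
  finally show ?thesis .
qed

definition prx :: "nat \<Rightarrow> (nat \<Rightarrow> complex) \<Rightarrow> nat \<Rightarrow> complex" where
  "prx n xi i = (\<Prod>k\<in>{0..<n} - {i}. xi i - xi k)"

definition Nmat :: "nat \<Rightarrow> complex \<Rightarrow> (nat \<Rightarrow> complex) \<Rightarrow> (nat \<Rightarrow> complex) \<Rightarrow> complex mat" where
  "Nmat n eps xi p = mat n n (\<lambda>(i,j).
     if i = j then p i - eps * xi i * (\<Sum>k\<in>{0..<n} - {i}. 1 / (xi i - xi k))
     else - (eps * xi i * prx n xi i / ((xi i - xi j) * prx n xi j)))"

lemma prx_nz: assumes "inj_on xi {0..<n}" "i < n" shows "prx n xi i \<noteq> 0"
  unfolding prx_def using assms by (auto simp: inj_on_def)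

lemma MN_rel:
  assumes inj: "inj_on xi {0..<n}" and i: "i < n" and j: "j < n"
  shows "tCM_lax n eps xi p $$ (i,j) * (xi j * prx n xi j ^ 2)
       = (xi i * prx n xi i ^ 2) * Nmat n eps xi p $$ (j,i)"
proof (cases "i = j")
  case True thus ?thesis using i unfolding tCM_lax_def Nmat_def by simp
next
  case False
  have d: "xi i - xi j \<noteq> 0" "xi j - xi i \<noteq> 0" using inj i j False by (auto simp: inj_on_def)
  have pi: "prx n xi i \<noteq> 0" and pj: "prx n xi j \<noteq> 0" using prx_nz[OF inj] i j by auto
  have Mij: "tCM_lax n eps xi p $$ (i,j) = eps * xi i / (xi i - xi j) * (prx n xi i / prx n xi j)"
    using i j False unfolding tCM_lax_def prx_def by simp
  have Nji: "Nmat n eps xi p $$ (j,i) = - (eps * xi j * prx n xi j / ((xi j - xi i) * prx n xi i))"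
    using i j False unfolding Nmat_def by simp
  show ?thesis unfolding Mij Nji using d pi pj
    by (simp add: field_simps power2_eq_square)
qed

lemma M_N_char_poly:
  assumes inj: "inj_on xi {0..<n}"
  shows "char_poly (tCM_lax n eps xi p) = char_poly (Nmat n eps xi p)"
proof -
  define M where "M = tCM_lax n eps xi p"
  define N where "N = Nmat n eps xi p"
  define d where "d i = xi i * prx n xi i ^ 2" for i
  have M: "M \<in> carrier_mat n n" and N: "N \<in> carrier_mat n n"
    unfolding M_def N_def tCM_lax_def Nmat_def by auto
  have rel: "\<And>i j. i < n \<Longrightarrow> j < n \<Longrightarrow> M $$ (i,j) * d j = d i * N $$ (j,i)"
    unfolding M_def N_def d_def by (rule MN_rel[OF inj])
  show ?thesis
  proof (cases "\<exists>k<n. xi k = 0")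
    case False
    hence "\<And>i. i < n \<Longrightarrow> d i \<noteq> 0" unfolding d_def using prx_nz[OF inj] by auto
    from diag_sim_char_poly[OF M N this rel] show ?thesis unfolding M_def N_def .
  next
    case True
    then obtain k where k: "k < n" and xk: "xi k = 0" by auto
    have M0: "M $$ (k,j) = 0" if "j < n" "j \<noteq> k" for j
      using that k xk unfolding M_def tCM_lax_def by simp
    have N0: "N $$ (k,j) = 0" if "j < n" "j \<noteq> k" for j
      using that k xk unfolding N_def Nmat_def by simp
    have Mkk: "M $$ (k,k) = N $$ (k,k)" using k unfolding M_def N_def tCM_lax_def Nmat_def by simp
    define f where "f i = (if i < k then i else Suc i)" for i
    have f: "i < n - 1 \<Longrightarrow> f i < n" for i unfolding f_def using k by auto
    have fk: "f i \<noteq> k" for i unfolding f_def by auto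
    have Md: "mat_delete M k k \<in> carrier_mat (n-1) (n-1)" using mat_delete_carrier[OF M] by simp
    have Nd: "mat_delete N k k \<in> carrier_mat (n-1) (n-1)" using mat_delete_carrier[OF N] by simp
    have "char_poly (mat_delete M k k) = char_poly (mat_delete N k k)"
    proof (rule diag_sim_char_poly[OF Md Nd, of "\<lambda>i. d (f i)"])
      fix i assume i: "i < n - 1"
      have "xi (f i) \<noteq> 0" using inj f[OF i] fk[of i] k xk unfolding inj_on_def by force
      thus "d (f i) \<noteq> 0" unfolding d_def using prx_nz[OF inj f[OF i]] by auto
    next
      fix i j assume i: "i < n - 1" and j: "j < n - 1"
      have "mat_delete M k k $$ (i,j) = M $$ (f i, f j)" "mat_delete N k k $$ (j,i) = N $$ (f j, f i)"
        using i j M N unfolding mat_delete_def f_def by auto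
      thus "mat_delete M k k $$ (i, j) * d (f j) = d (f i) * mat_delete N k k $$ (j, i)"
        using rel[OF f[OF i] f[OF j]] by simp
    qed
    thus ?thesis
      unfolding M_def[symmetric] N_def[symmetric]
      using char_poly_row[OF M k M0] char_poly_row[OF N k N0] Mkk by simp
  qed
qed



definition Lag :: "nat \<Rightarrow> (nat \<Rightarrow> complex) \<Rightarrow> nat \<Rightarrow> complex poly" where
  "Lag n xi k = Polynomial.smult (1 / prx n xi k) (\<Prod>m\<in>{0..<n} - {k}. [: - xi m, 1 :])"

lemma pderiv_sum': "pderiv (sum f A) = (\<Sum>x\<in>A. pderiv (f x))"
  using higher_pderiv_sum[of 1 f A] by simp

lemma degree_Lag: assumes "k < n" shows "degree (Lag n xi k) \<le> n - 1"
proof -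
  have "degree (\<Prod>m\<in>{0..<n} - {k}. [: - xi m, 1 :]) \<le> (\<Sum>m\<in>{0..<n} - {k}. 1)"
    by (rule order_trans[OF degree_prod_sum_le], auto)
  also have "\<dots> \<le> n - 1" using assms by (auto simp: card_Diff_singleton)
  finally show ?thesis unfolding Lag_def by (rule order_trans[OF degree_smult_le])
qed

lemma poly_Lag:
  assumes inj: "inj_on xi {0..<n}" and i: "i < n" and k: "k < n"
  shows "poly (Lag n xi k) (xi i) = (if i = k then 1 else 0)"
proof (cases "i = k")
  case True
  thus ?thesis using prx_nz[OF inj k] unfolding Lag_def by (simp add: poly_prod prx_def)
next
  case False
  hence "i \<in> {0..<n} - {k}" using i by auto
  hence "(\<Prod>m\<in>{0..<n} - {k}. poly [: - xi m, 1 :] (xi i)) = 0"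
    by (intro prod_zero) auto
  thus ?thesis using False unfolding Lag_def by (simp add: poly_prod)
qed

lemma interp:
  assumes inj: "inj_on xi {0..<n}" and j: "j < n"
  shows "(\<Sum>k<n. Polynomial.smult (xi k ^ j) (Lag n xi k)) = monom 1 j"
proof (rule poly_eqI_degree[of "xi ` {0..<n}"])
  fix x assume "x \<in> xi ` {0..<n}"
  then obtain i where i: "i < n" and x: "x = xi i" by auto
  have "poly (\<Sum>k<n. Polynomial.smult (xi k ^ j) (Lag n xi k)) x = (\<Sum>k<n. xi k ^ j * (if i = k then 1 else 0))"
    unfolding x poly_sum by (intro sum.cong refl, simp add: poly_Lag[OF inj i])
  also have "\<dots> = xi i ^ j" using i by (simp add: if_distrib cong: if_cong)
  finally show "poly (\<Sum>k<n. Polynomial.smult (xi k ^ j) (Lag n xi k)) x = poly (monom 1 j) x"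
    by (simp add: x poly_monom)
next
  have c: "card (xi ` {0..<n}) = n" using inj by (simp add: card_image)
  have "degree (\<Sum>k<n. Polynomial.smult (xi k ^ j) (Lag n xi k)) \<le> n - 1"
  proof (rule degree_sum_le)
    fix k assume "k \<in> {..<n}"
    hence "degree (Lag n xi k) \<le> n - 1" by (intro degree_Lag) auto
    thus "degree (Polynomial.smult (xi k ^ j) (Lag n xi k)) \<le> n - 1"
      by (meson degree_smult_le order_trans)
  qed simp
  thus "degree (\<Sum>k<n. Polynomial.smult (xi k ^ j) (Lag n xi k)) < card (xi ` {0..<n})" using c j by linarith
  show "degree (monom (1::complex) j) < card (xi ` {0..<n})" using c j by (simp add: degree_monom_eq)
qed

lemma pderiv_Lag:
  assumes inj: "inj_on xi {0..<n}" and i: "i < n" and k: "k < n"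
  shows "poly (pderiv (Lag n xi k)) (xi i) =
    (if i = k then (\<Sum>m\<in>{0..<n} - {i}. 1 / (xi i - xi m)) else prx n xi i / ((xi i - xi k) * prx n xi k))"
proof -
  define S where "S = {0..<n} - {k}"
  have fin: "finite S" unfolding S_def by auto
  have pd: "poly (pderiv (Lag n xi k)) (xi i) =
     (1 / prx n xi k) * (\<Sum>a\<in>S. \<Prod>m\<in>S - {a}. (xi i - xi m))"
  proof -
    have d1: "pderiv [: - xi m, 1 :] = 1" for m by (simp add: pderiv_pCons)
    have "pderiv (Lag n xi k) = Polynomial.smult (1 / prx n xi k)
        (\<Sum>a\<in>S. (\<Prod>m\<in>S - {a}. [: - xi m, 1 :]))"
      unfolding Lag_def pderiv_smult pderiv_prod S_def[symmetric] d1 by simp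
    hence "poly (pderiv (Lag n xi k)) (xi i) = (1 / prx n xi k) *
        (\<Sum>a\<in>S. (\<Prod>m\<in>S - {a}. poly [: - xi m, 1 :] (xi i)))"
      by (simp only: poly_smult poly_sum poly_prod)
    thus ?thesis by simp
  qed
  show ?thesis
  proof (cases "i = k")
    case True
    have "(\<Sum>a\<in>S. \<Prod>m\<in>S - {a}. (xi i - xi m)) = (\<Sum>a\<in>S. prx n xi i / (xi i - xi a))"
    proof (rule sum.cong[OF refl])
      fix a assume a: "a \<in> S"
      have a': "a < n" "a \<noteq> i" using a True unfolding S_def by auto
      hence "xi a \<noteq> xi i" using inj_onD[OF inj, of a i] k True by auto
      hence ne: "xi i - xi a \<noteq> 0" by simp
      have "prx n xi i = (xi i - xi a) * (\<Prod>m\<in>S - {a}. (xi i - xi m))"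
        unfolding prx_def True S_def[symmetric] by (rule prod.remove[OF fin a])
      thus "(\<Prod>m\<in>S - {a}. (xi i - xi m)) = prx n xi i / (xi i - xi a)" using ne by (simp add: field_simps)
    qed
    also have "\<dots> = prx n xi i * (\<Sum>a\<in>S. 1 / (xi i - xi a))"
      by (simp add: sum_distrib_left)
    finally show ?thesis using pd True prx_nz[OF inj k] unfolding S_def by simp
  next
    case False
    have iS: "i \<in> S" using False i unfolding S_def by auto
    have "(\<Sum>a\<in>S. \<Prod>m\<in>S - {a}. (xi i - xi m)) = (\<Prod>m\<in>S - {i}. (xi i - xi m)) + (\<Sum>a\<in>S - {i}. \<Prod>m\<in>S - {a}. (xi i - xi m))"
      by (rule sum.remove[OF fin iS])
    also have "(\<Sum>a\<in>S - {i}. \<Prod>m\<in>S - {a}. (xi i - xi m)) = 0"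
      by (rule sum.neutral, intro ballI prod_zero, insert fin iS, auto)
    also have "S - {i} = {0..<n} - {i} - {k}" unfolding S_def by auto
    finally have eq: "(\<Sum>a\<in>S. \<Prod>m\<in>S - {a}. (xi i - xi m)) = (\<Prod>m\<in>{0..<n} - {i} - {k}. (xi i - xi m))" by simp
    have ne: "xi i - xi k \<noteq> 0" using False inj i k unfolding inj_on_def by auto
    have "prx n xi i = (xi i - xi k) * (\<Prod>m\<in>{0..<n} - {i} - {k}. (xi i - xi m))"
      unfolding prx_def using False k by (intro prod.remove) auto
    hence "(\<Prod>m\<in>{0..<n} - {i} - {k}. (xi i - xi m)) = prx n xi i / (xi i - xi k)" using ne by (simp add: field_simps)
    thus ?thesis using pd eq False by simp
  qed
qed

lemma key_identity:
  assumes inj: "inj_on xi {0..<n}" and i: "i < n" and j: "j < n"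
  shows "(\<Sum>k<n. xi k ^ j * (xi i * poly (pderiv (Lag n xi k)) (xi i))) = of_nat j * xi i ^ j"
proof -
  have "pderiv (\<Sum>k<n. Polynomial.smult (xi k ^ j) (Lag n xi k)) = pderiv (monom 1 j)" using interp[OF inj j] by simp
  hence "(\<Sum>k<n. Polynomial.smult (xi k ^ j) (pderiv (Lag n xi k))) = monom (of_nat j) (j - 1)"
    by (simp add: pderiv_sum' pderiv_smult pderiv_monom)
  hence "poly (\<Sum>k<n. Polynomial.smult (xi k ^ j) (pderiv (Lag n xi k))) (xi i) = poly (monom (of_nat j) (j - 1)) (xi i)" by simp
  hence "(\<Sum>k<n. xi k ^ j * poly (pderiv (Lag n xi k)) (xi i)) = of_nat j * xi i ^ (j - 1)"
    by (simp add: poly_sum poly_monom)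
  hence "xi i * (\<Sum>k<n. xi k ^ j * poly (pderiv (Lag n xi k)) (xi i)) = of_nat j * xi i ^ j"
    by (cases j) auto
  thus ?thesis by (simp add: sum_distrib_left mult_ac)
qed



lemma N_D:
  assumes inj: "inj_on xi {0..<n}" and i: "i < n" and k: "k < n"
  shows "Nmat n eps xi p $$ (i,k) = (if i = k then p i else 0) - eps * (xi i * poly (pderiv (Lag n xi k)) (xi i))"
  using i k unfolding Nmat_def pderiv_Lag[OF inj i k] by (auto simp: field_simps)

lemma NV:
  assumes inj: "inj_on xi {0..<n}" and i: "i < n" and j: "j < n"
  shows "(\<Sum>l<n. Nmat n eps xi p $$ (i,l) * xi l ^ j) = p i * xi i ^ j - eps * (of_nat j * xi i ^ j)"
proof -
  have "(\<Sum>l<n. Nmat n eps xi p $$ (i,l) * xi l ^ j)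
     = (\<Sum>l<n. (if l = i then p i * xi i ^ j else 0) - eps * (xi l ^ j * (xi i * poly (pderiv (Lag n xi l)) (xi i))))"
    by (rule sum.cong[OF refl]) (auto simp: N_D[OF inj i] algebra_simps)
  also have "\<dots> = (\<Sum>l<n. (if l = i then p i * xi i ^ j else 0)) - eps * (\<Sum>l<n. xi l ^ j * (xi i * poly (pderiv (Lag n xi l)) (xi i)))"
    by (simp add: sum_subtractf sum_distrib_left)
  also have "\<dots> = p i * xi i ^ j - eps * (of_nat j * xi i ^ j)"
    using i key_identity[OF inj i j] by simp
  finally show ?thesis .
qed

lemma vander_inv:
  assumes inj: "inj_on xi {0..<n}"
  shows "mat n n (\<lambda>(j,k). coeff (Lag n xi k) j) * vander_mat n xi = 1\<^sub>m n"
proof (rule eq_matI)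
  fix a b assume a: "a < dim_row (1\<^sub>m n :: complex mat)" and b: "b < dim_col (1\<^sub>m n :: complex mat)"
  hence a: "a < n" and b: "b < n" by auto
  have "(mat n n (\<lambda>(j,k). coeff (Lag n xi k) j) * vander_mat n xi) $$ (a,b)
      = (\<Sum>k<n. coeff (Lag n xi k) a * xi k ^ b)"
    using a b unfolding vander_mat_def by (simp add: scalar_prod_def atLeast0LessThan)
  also have "\<dots> = coeff (\<Sum>k<n. Polynomial.smult (xi k ^ b) (Lag n xi k)) a"
    by (simp add: coeff_sum mult_ac)
  also have "\<dots> = coeff (monom 1 b) a" using interp[OF inj b] by simp
  also have "\<dots> = 1\<^sub>m n $$ (a,b)" using a b by (simp add: coeff_monom)
  finally show "(mat n n (\<lambda>(j,k). coeff (Lag n xi k) j) * vander_mat n xi) $$ (a,b) = 1\<^sub>m n $$ (a,b)" .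
qed (auto simp: vander_mat_def)

lemma det_vander_nz:
  assumes inj: "inj_on xi {0..<n}"
  shows "det (vander_mat n xi) \<noteq> 0"
proof -
  have "det (mat n n (\<lambda>(j,k). coeff (Lag n xi k) j)) * det (vander_mat n xi) = 1"
    using det_mult[of "mat n n (\<lambda>(j,k). coeff (Lag n xi k) j)" n "vander_mat n xi"] vander_inv[OF inj]
    by (simp add: vander_mat_def)
  thus ?thesis by auto
qed

interpretation const_hom: comm_ring_hom "\<lambda>a::complex. [:a:]"
  by unfold_locales auto

lemma const_sum: "(\<Sum>l\<in>A. [: f l :]) = [: (\<Sum>l\<in>A. f l) :: complex :]"
  by (induction A rule: infinite_finite_induct) auto

lemma wr_mat_factor:
  assumes inj: "inj_on xi {0..<n}"
  shows "wr_mat n eps xi p = char_poly_matrix (Nmat n eps xi p) * map_mat (\<lambda>a. [:a:]) (vander_mat n xi)"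
proof (rule eq_matI)
  fix i j assume "i < dim_row (char_poly_matrix (Nmat n eps xi p) * map_mat (\<lambda>a. [:a:]) (vander_mat n xi))"
    "j < dim_col (char_poly_matrix (Nmat n eps xi p) * map_mat (\<lambda>a. [:a:]) (vander_mat n xi))"
  hence i: "i < n" and j: "j < n" by (auto simp: char_poly_matrix_def Nmat_def vander_mat_def)
  define N where "N = Nmat n eps xi p"
  have dN: "dim_row N = n" "dim_col N = n" unfolding N_def Nmat_def by auto
  have cpm: "char_poly_matrix N $$ (i,l) = (if i = l then [:0,1:] else 0) + [: - N $$ (i,l) :]" if l: "l < n" for l
    using i l by (simp add: char_poly_matrix_def dN)
  have dC: "dim_row (char_poly_matrix N) = n" "dim_col (char_poly_matrix N) = n"
    by (simp_all add: char_poly_matrix_def dN)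
  have "(char_poly_matrix N * map_mat (\<lambda>a. [:a:]) (vander_mat n xi)) $$ (i,j)
     = (\<Sum>l<n. char_poly_matrix N $$ (i,l) * [: xi l ^ j :])"
    using i j dC by (simp add: vander_mat_def scalar_prod_def atLeast0LessThan)
  also have "\<dots> = (\<Sum>l<n. ((if i = l then [:0,1:] else 0) + [: - N $$ (i,l) :]) * [: xi l ^ j :])"
    by (rule sum.cong[OF refl], simp add: cpm)
  finally have "(char_poly_matrix (Nmat n eps xi p) * map_mat (\<lambda>a. [:a:]) (vander_mat n xi)) $$ (i,j)
     = (\<Sum>l<n. ((if i = l then [:0,1:] else 0) + [: - Nmat n eps xi p $$ (i,l) :]) * [: xi l ^ j :])"
    unfolding N_def .
  also have "\<dots> = (\<Sum>l<n. (if i = l then [:0, xi i ^ j:] else 0)) + (\<Sum>l<n. [: - (Nmat n eps xi p $$ (i,l) * xi l ^ j) :])"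
    by (subst sum.distrib[symmetric], rule sum.cong, auto)
  also have "\<dots> = [:0, xi i ^ j:] + [: - (\<Sum>l<n. Nmat n eps xi p $$ (i,l) * xi l ^ j) :]"
    using i by (simp add: const_sum sum_negf)
  also have "\<dots> = [:0, xi i ^ j:] + [: - (p i * xi i ^ j - eps * (of_nat j * xi i ^ j)) :]"
    unfolding NV[OF inj i j] ..
  also have "\<dots> = wr_mat n eps xi p $$ (i,j)"
    using i j by (simp add: wr_mat_def algebra_simps)
  finally show "wr_mat n eps xi p $$ (i,j) = (char_poly_matrix (Nmat n eps xi p) * map_mat (\<lambda>a. [:a:]) (vander_mat n xi)) $$ (i,j)" ..
qed (auto simp: wr_mat_def char_poly_matrix_def Nmat_def vander_mat_def)

lemma wr_N:
  assumes inj: "inj_on xi {0..<n}"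
  shows "wr_poly n eps xi p = char_poly (Nmat n eps xi p)"
proof -
  have C: "char_poly_matrix (Nmat n eps xi p) \<in> carrier_mat n n" by (simp add: Nmat_def)
  have V: "map_mat (\<lambda>a. [:a:]) (vander_mat n xi) \<in> carrier_mat n n" by (simp add: vander_mat_def)
  have "det (wr_mat n eps xi p) = char_poly (Nmat n eps xi p) * [: det (vander_mat n xi) :]"
    unfolding wr_mat_factor[OF inj] det_mult[OF C V] const_hom.hom_det char_poly_def ..
  thus ?thesis unfolding wr_poly_def using det_vander_nz[OF inj] by simp
qed

lemma main_eq:
  assumes inj: "inj_on xi {0..<n}"
  shows "wr_poly n eps xi p = tCM_poly n eps xi p"
  unfolding wr_N[OF inj] tCM_poly_def M_N_char_poly[OF inj] ..


theorem mainTheorem1: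
  fixes r :: nat and eps :: complex and xi p :: "nat \<Rightarrow> complex"
  assumes "r \<ge> 1"
    and "inj_on xi {0..<r+1}"
  shows "wr_poly (r+1) eps xi p = tCM_poly (r+1) eps xi p
    \<and> (\<forall>a. (\<forall>k. coeff (wr_poly (r+1) eps xi p) k = coeff (Lambda_poly (r+1) a) k)
         \<longleftrightarrow> (\<forall>k. tCM_hamiltonian (r+1) eps xi p k = coeff (Lambda_poly (r+1) a) k))"
proof -
  have eq: "wr_poly (r+1) eps xi p = tCM_poly (r+1) eps xi p" by (rule main_eq[OF assms(2)])
  show ?thesis unfolding tCM_hamiltonian_def eq by simp
qed

end
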